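(* Let $T$ be a minimal rotation on a locally connected compact metrizable group $X$ and let $f\colon X\to G$ be a continuous topologically recurrent cocycle for $T$ with values in a nilpotent locally compact second countable group $G$. Let $H$ be a closed subgroup of $G$ and $y\mapsto H_y$ a consistent selection of subgroups in the essential ranges of $f$ satisfying $E_y(f)\subseteq N(H_y)$ for every $y\in X$, and suppose there exists $x\in X$ with $E_x(f)=H_x$. Let $z\in X$ and $g\in N(H_z)\setminus H_z$. Then there is a neighbourhood $U$ of $\mathbf 1_G$ such that for all integers $n$, \[f(n,z)\,gH_z\,f(n,z)^{-1}\cap U=\varnothing.\]
   Context: The cocycle is $f(n,x)=f(T^{n-1}x)\cdots f(x)$ for $n\ge1$, $f(0,x)=\mathbf 1_G$, $f(n,x)=f(-n,T^nx)^{-1}$ for $n<0$. $f$ is topologically recurrent if for every open neighbourhood $U$ of $\mathbf 1_G$ and nonempty open $\mathcal O\subseteq X$ there is $n\neq0$ with $T^{-n}\mathcal O\cap\mathcal O\cap\{y:f(n,y)\in U\}\neq\varnothing$; $E_x(f)$ is the set of $g$ such that this holds for every open neighbourhood $U$ of $g$ and every open neighbourhood $\mathcal O$ of $x$. For a subgroup $L$, $N(L)=\{g\in G:gLg^{-1}=L\}$. $H^G=\{gHg^{-1}:g\in G\}$, topologised via the bijection with $G/N(H)$. A consistent selection is a continuous map $y\mapsto H_y$, $X\to H^G$, with $H_x\subseteq E_x(f)$ and $H_{T^nx}=f(n,x)H_xf(n,x)^{-1}$ for all $x,n$. *)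

theory Defs
  imports "HOL-Analysis.Analysis"
begin

text \<open>Groups are written additively via the (not necessarily commutative) type class
  topological_group_add: the group operation is +, the identity is 0, the inverse is uminus.\<close>

definition subgrp :: "'g::group_add set \<Rightarrow> bool" where
  "subgrp K \<longleftrightarrow> 0 \<in> K \<and> (\<forall>a\<in>K. \<forall>b\<in>K. a + b \<in> K) \<and> (\<forall>a\<in>K. - a \<in> K)"

definition gen_subgrp :: "'g::group_add set \<Rightarrow> 'g set" where
  "gen_subgrp S = \<Inter> {K. subgrp K \<and> S \<subseteq> K}"

definition commutator :: "'g::group_add \<Rightarrow> 'g \<Rightarrow> 'g" where
  "commutator a b = a + b + - a + - b"

fun lower_central :: "nat \<Rightarrow> 'g::group_add set" where
  "lower_central 0 = UNIV"
| "lower_central (Suc n) = gen_subgrp {commutator a b | a b. b \<in> lower_central n}"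

definition nilpotent_grp :: "'g::group_add itself \<Rightarrow> bool" where
  "nilpotent_grp _ \<longleftrightarrow> (\<exists>n. lower_central n = ({0} :: 'g set))"

definition conj_set :: "'g::group_add \<Rightarrow> 'g set \<Rightarrow> 'g set" where
  "conj_set g L = (\<lambda>h. g + h + - g) ` L"

definition normaliser :: "'g::group_add set \<Rightarrow> 'g set" where
  "normaliser L = {g. conj_set g L = L}"

definition conj_class :: "'g::group_add set \<Rightarrow> 'g set set" where
  "conj_class H = {conj_set g H | g. True}"

text \<open>Topology on H^G transported from G/N(H) via the bijection g N(H) \<mapsto> g H g^{-1}:
  a set V of conjugates is open iff its preimage under g \<mapsto> g H g^{-1} is open in G
  (this is exactly the quotient topology of G/N(H)).\<close>
definition conj_class_open :: "'g::topological_group_add set \<Rightarrow> 'g set set \<Rightarrow> bool" where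
  "conj_class_open H V \<longleftrightarrow> V \<subseteq> conj_class H \<and> open {g. conj_set g H \<in> V}"

definition Tpow :: "('x \<Rightarrow> 'x) \<Rightarrow> int \<Rightarrow> 'x \<Rightarrow> 'x" where
  "Tpow T n = (if 0 \<le> n then T ^^ nat n else (inv T) ^^ nat (- n))"

definition rotation :: "('x::group_add \<Rightarrow> 'x) \<Rightarrow> bool" where
  "rotation T \<longleftrightarrow> (\<exists>a. T = (\<lambda>x. a + x))"

definition minimal_map :: "('x::topological_space \<Rightarrow> 'x) \<Rightarrow> bool" where
  "minimal_map T \<longleftrightarrow> (\<forall>x. closure {Tpow T n x | n. True} = UNIV)"

definition minimal_rotation :: "('x::topological_group_add \<Rightarrow> 'x) \<Rightarrow> bool" where
  "minimal_rotation T \<longleftrightarrow> rotation T \<and> minimal_map T"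

fun cocycle_nat :: "('x \<Rightarrow> 'x) \<Rightarrow> ('x \<Rightarrow> 'g::group_add) \<Rightarrow> nat \<Rightarrow> 'x \<Rightarrow> 'g" where
  "cocycle_nat T f 0 x = 0"
| "cocycle_nat T f (Suc n) x = f ((T ^^ n) x) + cocycle_nat T f n x"

definition cocycle :: "('x \<Rightarrow> 'x) \<Rightarrow> ('x \<Rightarrow> 'g::group_add) \<Rightarrow> int \<Rightarrow> 'x \<Rightarrow> 'g" where
  "cocycle T f n x = (if 0 \<le> n then cocycle_nat T f (nat n) x
                      else - cocycle_nat T f (nat (- n)) (Tpow T n x))"

definition top_recurrent ::
  "('x::topological_space \<Rightarrow> 'x) \<Rightarrow> ('x \<Rightarrow> 'g::{topological_space, group_add}) \<Rightarrow> bool" where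
  "top_recurrent T f \<longleftrightarrow>
     (\<forall>U W. open U \<and> 0 \<in> U \<and> open W \<and> W \<noteq> {} \<longrightarrow>
        (\<exists>n::int. n \<noteq> 0 \<and> (\<exists>y. Tpow T n y \<in> W \<and> y \<in> W \<and> cocycle T f n y \<in> U)))"

definition ess_range ::
  "('x::topological_space \<Rightarrow> 'x) \<Rightarrow> ('x \<Rightarrow> 'g::{topological_space, group_add}) \<Rightarrow> 'x \<Rightarrow> 'g set" where
  "ess_range T f x = {g. \<forall>U W. open U \<and> g \<in> U \<and> open W \<and> x \<in> W \<longrightarrow>
        (\<exists>n::int. n \<noteq> 0 \<and> (\<exists>y. Tpow T n y \<in> W \<and> y \<in> W \<and> cocycle T f n y \<in> U))}"

definition consistent_selection ::
  "('x::topological_space \<Rightarrow> 'x) \<Rightarrow> ('x \<Rightarrow> 'g::topological_group_add) \<Rightarrow> 'g set \<Rightarrow> ('x \<Rightarrow> 'g set) \<Rightarrow> bool" where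
  "consistent_selection T f H Hs \<longleftrightarrow>
     (\<forall>y. Hs y \<in> conj_class H) \<and>
     (\<forall>V. conj_class_open H V \<longrightarrow> open {y. Hs y \<in> V}) \<and>
     (\<forall>y. Hs y \<subseteq> ess_range T f y) \<and>
     (\<forall>x n. Hs (Tpow T n x) = conj_set (cocycle T f n x) (Hs x))"

end

theory Submission
  imports Defs
begin

lemmas gs = add.assoc minus_add diff_conv_add_uminus

lemma conj_set_conj: "conj_set a (conj_set b L) = conj_set (a + b) (L::'g::group_add set)"
  unfolding conj_set_def image_image by (simp add: gs del: add_uminus_conv_diff)

lemma conj_set_0: "conj_set 0 (L::'g::group_add set) = L"
  unfolding conj_set_def by simp

lemma normaliser_iff:
  "(g::'g::group_add) \<in> normaliser L \<longleftrightarrow> (\<forall>h\<in>L. g + h + - g \<in> L) \<and> (\<forall>h\<in>L. - g + h + g \<in> L)"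
proof
  assume "g \<in> normaliser L"
  then have e: "conj_set g L = L" by (simp add: normaliser_def)
  have 1: "\<forall>h\<in>L. g + h + - g \<in> L" using e unfolding conj_set_def by blast
  have 2: "- g + h + g \<in> L" if "h \<in> L" for h
  proof -
    from that e obtain h' where "h' \<in> L" "h = g + h' + - g" unfolding conj_set_def by blast
    then show ?thesis by (simp add: add.assoc)
  qed
  show "(\<forall>h\<in>L. g + h + - g \<in> L) \<and> (\<forall>h\<in>L. - g + h + g \<in> L)" using 1 2 by blast
next
  assume a: "(\<forall>h\<in>L. g + h + - g \<in> L) \<and> (\<forall>h\<in>L. - g + h + g \<in> L)"
  have "conj_set g L = L"
  proof
    show "conj_set g L \<subseteq> L" using a unfolding conj_set_def by blast
    show "L \<subseteq> conj_set g L"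
    proof
      fix h assume "h \<in> L"
      then have "- g + h + g \<in> L" using a by blast
      moreover have "h = g + (- g + h + g) + - g" by (simp add: add.assoc)
      ultimately show "h \<in> conj_set g L" unfolding conj_set_def by blast
    qed
  qed
  then show "g \<in> normaliser L" by (simp add: normaliser_def)
qed

lemma normaliser_add: "a \<in> normaliser L \<Longrightarrow> b \<in> normaliser L \<Longrightarrow> a + b \<in> normaliser (L::'g::group_add set)"
  by (simp add: normaliser_def conj_set_conj[symmetric])

lemma normaliser_minus: "a \<in> normaliser L \<Longrightarrow> - a \<in> normaliser (L::'g::group_add set)"
proof -
  assume "a \<in> normaliser L"
  then have "conj_set a L = L" by (simp add: normaliser_def)
  then have "conj_set (- a) L = conj_set (-a) (conj_set a L)" by simp
  also have "\<dots> = L" by (simp add: conj_set_conj conj_set_0)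
  finally show ?thesis by (simp add: normaliser_def)
qed

lemma normaliser_0: "0 \<in> normaliser (L::'g::group_add set)"
  by (simp add: normaliser_def conj_set_0)

lemma subgrp_normaliser: "subgrp H \<Longrightarrow> H \<subseteq> normaliser (H::'g::group_add set)"
proof
  fix x assume H: "subgrp H" and x: "x \<in> H"
  show "x \<in> normaliser H" unfolding normaliser_iff
    using H x unfolding subgrp_def by (auto simp del: add_uminus_conv_diff)
qed

fun Bs :: "'g::group_add set \<Rightarrow> nat \<Rightarrow> 'g set" where
  "Bs H 0 = H"
| "Bs H (Suc j) = {q \<in> normaliser H. \<forall>p \<in> normaliser H. commutator q p \<in> Bs H j}"

lemma comm_add: "commutator (q1 + q2) p = (q1 + commutator q2 p + - q1) + commutator q1 (p::'g::group_add)"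
  by (simp add: gs commutator_def del: add_uminus_conv_diff)

lemma comm_minus: "commutator (- q) p = - q + - commutator q p + q" for q p :: "'g::group_add"
  by (simp add: gs commutator_def del: add_uminus_conv_diff)

lemma comm_conj: "commutator (v + q + - v) p = v + commutator q (- v + p + v) + - v" for q p v :: "'g::group_add"
  by (simp add: gs commutator_def del: add_uminus_conv_diff)

lemma comm_swap: "commutator q p = - commutator p q" for q p :: "'g::group_add"
  by (simp add: gs commutator_def del: add_uminus_conv_diff)

lemma Bs_props:
  assumes H: "subgrp (H::'g::group_add set)"
  shows "subgrp (Bs H j) \<and> H \<subseteq> Bs H j \<and> (\<forall>v\<in>normaliser H. \<forall>q\<in>Bs H j. v + q + - v \<in> Bs H j)"
proof (induction j)
  case 0
  then show ?case using H by (auto simp: normaliser_iff)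
next
  case (Suc j)
  let ?B = "Bs H j"
  have sg: "subgrp ?B" and HB: "H \<subseteq> ?B" and nB: "\<And>v q. v \<in> normaliser H \<Longrightarrow> q \<in> ?B \<Longrightarrow> v + q + - v \<in> ?B"
    using Suc by auto
  have B0: "0 \<in> ?B" and Badd: "\<And>a b. a \<in> ?B \<Longrightarrow> b \<in> ?B \<Longrightarrow> a + b \<in> ?B"
    and Bminus: "\<And>a. a \<in> ?B \<Longrightarrow> - a \<in> ?B" using sg unfolding subgrp_def by auto
  have H0: "0 \<in> H" and Hadd: "\<And>a b. a \<in> H \<Longrightarrow> b \<in> H \<Longrightarrow> a + b \<in> H"
    and Hminus: "\<And>a. a \<in> H \<Longrightarrow> - a \<in> H" using H unfolding subgrp_def by auto
  have HN: "H \<subseteq> normaliser H" by (rule subgrp_normaliser[OF H])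
  have 1: "H \<subseteq> Bs H (Suc j)"
  proof
    fix q assume q: "q \<in> H"
    have "commutator q p \<in> ?B" if p: "p \<in> normaliser H" for p
    proof -
      have "p + - q + - p \<in> H" using p Hminus[OF q] by (simp add: normaliser_iff del: add_uminus_conv_diff)
      then have "q + (p + - q + - p) \<in> H" using Hadd q by blast
      then show ?thesis using HB unfolding commutator_def by (auto simp: add.assoc simp del: add_uminus_conv_diff)
    qed
    then show "q \<in> Bs H (Suc j)" using q HN by auto
  qed
  have 2: "subgrp (Bs H (Suc j))"
    unfolding subgrp_def
  proof (intro conjI ballI)
    show "0 \<in> Bs H (Suc j)" using B0 normaliser_0 by (auto simp: commutator_def)
  next
    fix a b assume a: "a \<in> Bs H (Suc j)" and b: "b \<in> Bs H (Suc j)"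
    have "commutator (a + b) p \<in> ?B" if p: "p \<in> normaliser H" for p
      unfolding comm_add using a b p by (auto intro!: Badd nB simp del: add_uminus_conv_diff)
    then show "a + b \<in> Bs H (Suc j)" using a b normaliser_add by auto
  next
    fix a assume a: "a \<in> Bs H (Suc j)"
    have "commutator (- a) p \<in> ?B" if p: "p \<in> normaliser H" for p
    proof -
      have "- a + - commutator a p + - (- a) \<in> ?B"
        using a p by (intro nB normaliser_minus Bminus) auto
      then show ?thesis unfolding comm_minus by simp
    qed
    then show "- a \<in> Bs H (Suc j)" using a normaliser_minus by auto
  qed
  have 3: "v + q + - v \<in> Bs H (Suc j)" if v: "v \<in> normaliser H" and q: "q \<in> Bs H (Suc j)" for v q
  proof -
    have "commutator (v + q + - v) p \<in> ?B" if p: "p \<in> normaliser H" for p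
      unfolding comm_conj using v q p
      by (auto intro!: nB normaliser_add normaliser_minus simp del: add_uminus_conv_diff)
    moreover have "v + q + - v \<in> normaliser H" using v q
      by (auto intro!: normaliser_add normaliser_minus simp del: add_uminus_conv_diff)
    ultimately show ?thesis by auto
  qed
  show ?case using 1 2 3 by blast
qed

lemma closed_normaliser:
  assumes "closed (H::'g::topological_group_add set)"
  shows "closed (normaliser H)"
proof -
  have eq: "normaliser H = (\<Inter>h\<in>H. (\<lambda>g. g + h + - g) -` H \<inter> (\<lambda>g. - g + h + g) -` H)"
    by (auto simp: normaliser_iff simp del: add_uminus_conv_diff)
  show ?thesis unfolding eq
    by (intro closed_INT ballI closed_Int continuous_closed_vimage assms continuous_intros)
qed

lemma closed_Bs:
  assumes "closed (H::'g::topological_group_add set)"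
  shows "closed (Bs H j)"
proof (induction j)
  case 0 then show ?case using assms by simp
next
  case (Suc j)
  have eq: "Bs H (Suc j) = normaliser H \<inter> (\<Inter>p\<in>normaliser H. (\<lambda>q. commutator q p) -` Bs H j)"
    by auto
  show ?case unfolding eq commutator_def
    by (intro closed_INT ballI closed_Int continuous_closed_vimage closed_normaliser assms Suc continuous_intros)
qed

lemma gen_subgrp_sup: "S \<subseteq> gen_subgrp S"
  unfolding gen_subgrp_def by blast

lemma nilp_Bs:
  assumes H: "subgrp (H::'g::group_add set)" and nil: "nilpotent_grp TYPE('g)"
  shows "\<exists>c. normaliser H \<subseteq> Bs H c"
proof -
  obtain c where c: "lower_central c = ({0}::'g set)" using nil unfolding nilpotent_grp_def by blast
  have "j \<le> c \<Longrightarrow> lower_central (c - j) \<inter> normaliser H \<subseteq> Bs H j" for j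
  proof (induction j)
    case 0 then show ?case using c Bs_props[OF H] H unfolding subgrp_def by auto
  next
    case (Suc j)
    then have IH: "lower_central (Suc (c - Suc j)) \<inter> normaliser H \<subseteq> Bs H j"
      by (simp add: Suc_diff_Suc)
    have sg: "subgrp (Bs H j)" using Bs_props[OF H] by blast
    show ?case
    proof
      fix q assume q: "q \<in> lower_central (c - Suc j) \<inter> normaliser H"
      have "commutator q p \<in> Bs H j" if p: "p \<in> normaliser H" for p
      proof -
        have "commutator p q \<in> lower_central (Suc (c - Suc j))"
          using q gen_subgrp_sup[of "{commutator a b |a b. b \<in> lower_central (c - Suc j)}"] by auto
        moreover have "commutator p q \<in> normaliser H" using p q unfolding commutator_def
          by (auto intro!: normaliser_add normaliser_minus simp del: add_uminus_conv_diff)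
        ultimately have "commutator p q \<in> Bs H j" using IH by blast
        then show ?thesis using sg comm_swap[of q p] unfolding subgrp_def by auto
      qed
      then show "q \<in> Bs H (Suc j)" using q by auto
    qed
  qed
  from this[of c] show ?thesis by auto
qed

lemma core:
  assumes H: "subgrp (H::'g::topological_group_add set)" and Hc: "closed H"
  shows "g' \<in> Bs H j \<Longrightarrow> 0 \<in> closure {v + g' + h + - v |v h. v \<in> normaliser H \<and> h \<in> H} \<Longrightarrow> g' \<in> H"
proof (induction j arbitrary: g')
  case 0 then show ?case by simp
next
  case (Suc j)
  let ?S = "{v + g' + h + - v |v h. v \<in> normaliser H \<and> h \<in> H}"
  have props: "subgrp (Bs H j)" "H \<subseteq> Bs H j" "\<forall>v\<in>normaliser H. \<forall>q\<in>Bs H j. v + q + - v \<in> Bs H j"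
    using Bs_props[OF H] by auto
  have g'N: "g' \<in> normaliser H" and g'c: "\<forall>p\<in>normaliser H. commutator g' p \<in> Bs H j"
    using Suc.prems by auto
  have sub: "?S \<subseteq> (\<lambda>x. x + - g') -` Bs H j"
  proof
    fix s assume "s \<in> ?S"
    then obtain v h where v: "v \<in> normaliser H" and h: "h \<in> H" and s: "s = v + g' + h + - v" by blast
    have e: "s + - g' = - commutator g' v + (g' + (v + h + - v) + - g')"
      unfolding s commutator_def by (simp add: gs del: add_uminus_conv_diff)
    have a: "- commutator g' v \<in> Bs H j" using g'c v props(1) unfolding subgrp_def by auto
    have "v + h + - v \<in> H" using v h by (simp add: normaliser_iff del: add_uminus_conv_diff)
    then have b: "g' + (v + h + - v) + - g' \<in> Bs H j" using props g'N by blast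
    show "s \<in> (\<lambda>x. x + - g') -` Bs H j" using e a b props(1) unfolding subgrp_def by auto
  qed
  have cl: "closed ((\<lambda>x. x + - g') -` Bs H j)"
    by (intro continuous_closed_vimage closed_Bs Hc continuous_intros)
  have "0 \<in> (\<lambda>x. x + - g') -` Bs H j"
    using closure_minimal[OF sub cl] Suc.prems(2) by blast
  then have "g' \<in> Bs H j" using props(1) unfolding subgrp_def by force
  then show ?case using Suc.IH Suc.prems(2) by blast
qed

lemma conj_eq: "conj_set g H = conj_set e H \<longleftrightarrow> - e + g \<in> normaliser (H::'g::group_add set)"
proof
  assume a: "conj_set g H = conj_set e H"
  have "conj_set (- e + g) H = conj_set (- e) (conj_set g H)" by (simp add: conj_set_conj)
  also have "\<dots> = H" by (simp add: a conj_set_conj conj_set_0)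
  finally show "- e + g \<in> normaliser H" by (simp add: normaliser_def)
next
  assume a: "- e + g \<in> normaliser H"
  have "conj_set g H = conj_set (e + (- e + g)) H" by (simp add: add.assoc)
  also have "\<dots> = conj_set e (conj_set (- e + g) H)" by (simp add: conj_set_conj)
  also have "\<dots> = conj_set e H" using a by (simp add: normaliser_def)
  finally show "conj_set g H = conj_set e H" .
qed

lemma compact_lift:
  fixes Hs :: "'x::topological_space \<Rightarrow> 'g::topological_group_add set"
  assumes X: "compact (UNIV :: 'x set)" and lc: "locally compact (UNIV :: 'g set)"
    and cls: "\<forall>y. Hs y \<in> conj_class H"
    and cont: "\<forall>V. conj_class_open H V \<longrightarrow> open {y. Hs y \<in> V}"
  shows "\<exists>K. compact K \<and> (\<forall>y. \<exists>d\<in>K. Hs y = conj_set d H)"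
proof -
  have "\<exists>p. open (fst p) \<and> compact (snd p) \<and> e \<in> fst p \<and> fst p \<subseteq> snd p" for e :: 'g
  proof -
    obtain U V where "openin (top_of_set UNIV) U" "compact V" "e \<in> U" "U \<subseteq> V"
      using locallyE[OF lc, of UNIV e] by auto
    then show ?thesis by (intro exI[of _ "(U, V)"]) auto
  qed
  then have "\<forall>e::'g. \<exists>p. open (fst p) \<and> compact (snd p) \<and> e \<in> fst p \<and> fst p \<subseteq> snd p" by blast
  from choice[OF this] obtain P where P: "\<And>e::'g. open (fst (P e)) \<and> compact (snd (P e)) \<and> e \<in> fst (P e) \<and> fst (P e) \<subseteq> snd (P e)"
    by blast
  define Ob where "Ob e = fst (P e)" for e
  define V where "V e = snd (P e)" for e
  have OV: "\<And>e::'g. open (Ob e) \<and> compact (V e) \<and> e \<in> Ob e \<and> Ob e \<subseteq> V e"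
    using P unfolding Ob_def V_def by blast
  define Vs where "Vs e = {conj_set e' H | e'. e' \<in> Ob e}" for e
  have opn: "open {y. Hs y \<in> Vs e}" for e
  proof -
    have eq: "{g. conj_set g H \<in> Vs e} = (\<Union>v\<in>normaliser H. (\<lambda>x. x + - v) -` Ob e)"
    proof (rule set_eqI, rule iffI)
      fix g assume "g \<in> {g. conj_set g H \<in> Vs e}"
      then obtain e' where e': "e' \<in> Ob e" "conj_set g H = conj_set e' H" unfolding Vs_def by auto
      then have n: "- e' + g \<in> normaliser H" by (simp add: conj_eq)
      have "g + - (- e' + g) = e'" by (simp add: gs del: add_uminus_conv_diff)
      then show "g \<in> (\<Union>v\<in>normaliser H. (\<lambda>x. x + - v) -` Ob e)" using n e' by force
    next
      fix g assume "g \<in> (\<Union>v\<in>normaliser H. (\<lambda>x. x + - v) -` Ob e)"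
      then obtain v where v: "v \<in> normaliser H" "g + - v \<in> Ob e" by auto
      have "- (g + - v) + g = v" by (simp add: gs del: add_uminus_conv_diff)
      then have "conj_set g H = conj_set (g + - v) H" using v by (simp add: conj_eq)
      then show "g \<in> {g. conj_set g H \<in> Vs e}" using v unfolding Vs_def by blast
    qed
    have "conj_class_open H (Vs e)"
      unfolding conj_class_open_def
    proof
      show "Vs e \<subseteq> conj_class H" unfolding Vs_def conj_class_def by auto
      show "open {g. conj_set g H \<in> Vs e}" unfolding eq
        using OV by (intro open_UN ballI continuous_open_vimage continuous_intros) auto
    qed
    then show ?thesis using cont by blast
  qed
  have cov: "UNIV \<subseteq> (\<Union>e\<in>UNIV. {y. Hs y \<in> Vs e})"
  proof
    fix y
    obtain e where "Hs y = conj_set e H" using cls unfolding conj_class_def by auto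
    then show "y \<in> (\<Union>e\<in>UNIV. {y. Hs y \<in> Vs e})" using OV unfolding Vs_def by blast
  qed
  have opn': "\<And>e. e \<in> UNIV \<Longrightarrow> open {y. Hs y \<in> Vs e}" using opn by blast
  obtain D where D0: "D \<subseteq> UNIV" and D: "finite D" "UNIV \<subseteq> (\<Union>e\<in>D. {y. Hs y \<in> Vs e})"
    by (rule compactE_image[OF X opn' cov])
  have "compact (\<Union>e\<in>D. V e)" using D OV by auto
  moreover have "\<exists>d\<in>(\<Union>e\<in>D. V e). Hs y = conj_set d H" for y
  proof -
    obtain e where e: "e \<in> D" "Hs y \<in> Vs e" using D by blast
    then obtain e' where "e' \<in> Ob e" "Hs y = conj_set e' H" unfolding Vs_def by auto
    then show ?thesis using e OV by blast
  qed
  ultimately show ?thesis by blast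
qed

lemma tube_conj:
  fixes K C :: "'g::topological_group_add set"
  assumes K: "compact K" and C: "closed C" and C0: "0 \<notin> C"
  shows "\<exists>U. open U \<and> 0 \<in> U \<and> (\<forall>d\<in>K. \<forall>s\<in>C. d + s + - d \<notin> U)"
proof -
  define W where "W = (\<lambda>p::'g \<times> 'g. - snd p + fst p + snd p) -` (- C)"
  have "open W" unfolding W_def
    by (intro continuous_open_vimage continuous_intros) (use C in auto)
  moreover have "{0} \<times> K \<subseteq> W" unfolding W_def using C0 by auto
  ultimately obtain X0 where X0: "0 \<in> X0" "open X0" "X0 \<times> K \<subseteq> W"
    using Elementary_Topology.tube_lemma[OF K, of W 0] by meson
  have "d + s + - d \<notin> X0" if "d \<in> K" "s \<in> C" for d s
  proof
    assume "d + s + - d \<in> X0"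
    then have "(d + s + - d, d) \<in> W" using X0 that by blast
    then show False using that unfolding W_def by (simp add: gs del: add_uminus_conv_diff)
  qed
  then show ?thesis using X0 by blast
qed

theorem lemma4p5:
  fixes T :: "'x::{metric_space, topological_group_add} \<Rightarrow> 'x"
    and f :: "'x \<Rightarrow> 'g::{topological_group_add, t2_space, second_countable_topology}"
    and H :: "'g set"
    and Hs :: "'x \<Rightarrow> 'g set"
    and x z :: 'x
    and g :: 'g
  assumes X_compact: "compact (UNIV :: 'x set)"
    and X_loc_conn: "locally connected (UNIV :: 'x set)"
    and G_loc_compact: "locally compact (UNIV :: 'g set)"
    and G_nilpotent: "nilpotent_grp TYPE('g)"
    and T_min: "minimal_rotation T"
    and f_cont: "continuous_on UNIV f"
    and f_rec: "top_recurrent T f"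
    and H_closed: "closed H"
    and H_subgrp: "subgrp H"
    and sel: "consistent_selection T f H Hs"
    and norm: "\<And>y. ess_range T f y \<subseteq> normaliser (Hs y)"
    and x_eq: "ess_range T f x = Hs x"
    and g_in: "g \<in> normaliser (Hs z) - Hs z"
  shows "\<exists>U. open U \<and> 0 \<in> U \<and>
           (\<forall>n::int. conj_set (cocycle T f n z) ((\<lambda>h. g + h) ` Hs z) \<inter> U = {})"
proof -
  have cls: "\<forall>y. Hs y \<in> conj_class H" and cont: "\<forall>V. conj_class_open H V \<longrightarrow> open {y. Hs y \<in> V}"
    and cov: "\<And>x n. Hs (Tpow T n x) = conj_set (cocycle T f n x) (Hs x)"
    using sel unfolding consistent_selection_def by auto
  obtain b where b: "Hs z = conj_set b H" using cls unfolding conj_class_def by auto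
  obtain K where K: "compact K" and Kd: "\<And>y. \<exists>d\<in>K. Hs y = conj_set d H"
    using compact_lift[OF X_compact G_loc_compact cls cont] by blast
  define g' where "g' = - b + g + b"
  have gN: "conj_set g (conj_set b H) = conj_set b H" using g_in b by (simp add: normaliser_def)
  have "conj_set g' H = conj_set (- b) (conj_set g (conj_set b H))"
    unfolding g'_def by (simp add: conj_set_conj add.assoc)
  also have "\<dots> = H" by (simp only: gN) (simp add: conj_set_conj conj_set_0)
  finally have g'N: "g' \<in> normaliser H" by (simp add: normaliser_def)
  have g'H: "g' \<notin> H"
  proof
    assume "g' \<in> H"
    then have "b + g' + - b \<in> Hs z" unfolding b conj_set_def by blast
    moreover have "b + g' + - b = g" unfolding g'_def by (simp add: gs del: add_uminus_conv_diff)
    ultimately show False using g_in by simp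
  qed
  define S where "S = {v + g' + h + - v |v h. v \<in> normaliser H \<and> h \<in> H}"
  have S0: "0 \<notin> closure S"
  proof
    assume a: "0 \<in> closure S"
    obtain c where "normaliser H \<subseteq> Bs H c" using nilp_Bs[OF H_subgrp G_nilpotent] by blast
    then have "g' \<in> Bs H c" using g'N by blast
    then have "g' \<in> H" using core[OF H_subgrp H_closed] a unfolding S_def by blast
    then show False using g'H by blast
  qed
  obtain U where U: "open U" "0 \<in> U" and Ud: "\<And>d s. d \<in> K \<Longrightarrow> s \<in> closure S \<Longrightarrow> d + s + - d \<notin> U"
    using tube_conj[OF K closed_closure S0] by blast
  have "conj_set (cocycle T f n z) ((\<lambda>h. g + h) ` Hs z) \<inter> U = {}" for n
  proof -
    let ?c = "cocycle T f n z"
    obtain d where d: "d \<in> K" "Hs (Tpow T n z) = conj_set d H" using Kd by blast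
    have "conj_set d H = conj_set (?c + b) H" using d cov[of n z] b by (simp add: conj_set_conj)
    then have vN: "- d + (?c + b) \<in> normaliser H" by (metis conj_eq)
    have "e \<notin> U" if e: "e \<in> conj_set ?c ((\<lambda>h. g + h) ` Hs z)" for e
    proof -
      obtain h' where h': "h' \<in> H" "e = ?c + (g + (b + h' + - b)) + - ?c"
        using e unfolding b conj_set_def by auto
      let ?v = "- d + (?c + b)"
      have "e = d + (?v + g' + h' + - ?v) + - d"
        unfolding h' g'_def by (simp add: gs del: add_uminus_conv_diff)
      moreover have "?v + g' + h' + - ?v \<in> closure S"
        using vN h' unfolding S_def by (intro closure_subset[THEN subsetD]) blast
      ultimately show ?thesis using Ud d by blast
    qed
    then show ?thesis by blast
  qed
  then show ?thesis using U by blast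
qed

end
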